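(* Let $\alpha\in\mathbb C$, $\alpha\neq0$, and let $|\xi\rangle=\frac{a^\dagger|\alpha\rangle}{\sqrt{1+|\alpha|^2}}$ be the (normalized) photon-added coherent state, so that $\lambda_0=0$. Set $\beta=\alpha/\sqrt2$ and $|\psi^\perp\rangle=(a^\dagger-\beta^* )|\beta\rangle$ (a unit vector orthogonal to $|\beta\rangle$). Take Bob's measurement $\Pi^B_0=\sum_{m\ge0}|2m\rangle\langle2m|$, $\Pi^B_1=\sum_{m\ge0}|2m+1\rangle\langle2m+1|$, and any two-outcome projective measurement $\{\Pi^A_0,\Pi^A_1\}$ for Alice with $\Pi^A_1|\beta\rangle=|\beta\rangle$ and $\Pi^A_0|\psi^\perp\rangle=|\psi^\perp\rangle$. Then $P(0,0|0,0)=P(0,0|1,1)=\frac{1+e^{-|\alpha|^2}}{2(1+|\alpha|^2)}$, $P(1,1|0,1)=P(1,1|1,0)=\frac{1+2|\alpha|^2+e^{-|\alpha|^2}}{2(1+|\alpha|^2)}$, and therefore $\mathcal J=\frac12+\frac{e^{-|\alpha|^2}}{2(1+|\alpha|^2)}>\frac12$.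
   Context: Modes $A$ and $B$ have annihilation operators $a,b$ and Fock states $|n\rangle$; $|\gamma\rangle=e^{-|\gamma|^2/2}\sum_n\frac{\gamma^n}{\sqrt{n!}}|n\rangle$ is a coherent state. For a normalized single-mode state $|\xi\rangle=\sum_n\lambda_n|n\rangle$ with $|\lambda_0|<1$ and input bits $x,y\in\{0,1\}$, the phase-encoded generalized NOON state is $|\Phi_{xy}\rangle=\mathcal N_{xy}^{-1/2}\big((-1)^x|\xi\rangle_A|0\rangle_B+(-1)^y|0\rangle_A|\xi\rangle_B\big)$ with $\mathcal N_{xy}=2(1+(-1)^{x+y}|\lambda_0|^2)$. The lossless 50:50 beam splitter is the unitary $U$ with $U|0,0\rangle=|0,0\rangle$, $Ua^\dagger U^\dagger=(a^\dagger+b^\dagger)/\sqrt2$, $Ub^\dagger U^\dagger=(a^\dagger-b^\dagger)/\sqrt2$; set $|\Phi''_{xy}\rangle=U|\Phi_{xy}\rangle$. For two-outcome projective measurements $\{\Pi^A_0,\Pi^A_1\}$ on mode $A$, $\{\Pi^B_0,\Pi^B_1\}$ on mode $B$, $P(a,b|x,y)=\langle\Phi''_{xy}|\Pi^A_a\otimes\Pi^B_b|\Phi''_{xy}\rangle$ and $\mathcal J=\frac14\big[P(0,0|0,0)+P(0,0|1,1)+P(1,1|0,1)+P(1,1|1,0)\big]$. *)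

theory Defs
  imports "HOL-Analysis.Analysis"
begin

section \<open>Single-mode Fock space: vectors are coefficient sequences nat \<Rightarrow> complex\<close>

definition l2vec :: "(nat \<Rightarrow> complex) \<Rightarrow> bool" where
  "l2vec f \<longleftrightarrow> summable (\<lambda>n. (norm (f n))^2)"

definition vinner :: "(nat \<Rightarrow> complex) \<Rightarrow> (nat \<Rightarrow> complex) \<Rightarrow> complex" where
  "vinner f g = (\<Sum>n. cnj (f n) * g n)"

definition coh :: "complex \<Rightarrow> nat \<Rightarrow> complex" where
  "coh g n = complex_of_real (exp (- (norm g ^ 2) / 2)) * g ^ n
               / complex_of_real (sqrt (fact n))"

definition create :: "(nat \<Rightarrow> complex) \<Rightarrow> nat \<Rightarrow> complex" where
  "create f n = (if n = 0 then 0 else complex_of_real (sqrt (real n)) * f (n - 1))"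

definition photon_added :: "complex \<Rightarrow> nat \<Rightarrow> complex" where
  "photon_added \<alpha> n = create (coh \<alpha>) n / complex_of_real (sqrt (1 + (norm \<alpha>)^2))"

text \<open>Orthogonal projection on l2(N) (acting on l2 vectors; behaviour elsewhere irrelevant).\<close>
definition is_proj :: "((nat \<Rightarrow> complex) \<Rightarrow> (nat \<Rightarrow> complex)) \<Rightarrow> bool" where
  "is_proj P \<longleftrightarrow>
     (\<forall>f. l2vec f \<longrightarrow> l2vec (P f)) \<and>
     (\<forall>f g c. l2vec f \<longrightarrow> l2vec g \<longrightarrow> P (\<lambda>n. f n + c * g n) = (\<lambda>n. P f n + c * P g n)) \<and>
     (\<forall>f. l2vec f \<longrightarrow> P (P f) = P f) \<and>
     (\<forall>f g. l2vec f \<longrightarrow> l2vec g \<longrightarrow> vinner (P f) g = vinner f (P g))"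

definition two_outcome_pvm ::
  "((nat \<Rightarrow> complex) \<Rightarrow> (nat \<Rightarrow> complex)) \<Rightarrow> ((nat \<Rightarrow> complex) \<Rightarrow> (nat \<Rightarrow> complex)) \<Rightarrow> bool" where
  "two_outcome_pvm P0 P1 \<longleftrightarrow> is_proj P0 \<and> is_proj P1 \<and>
     (\<forall>f. l2vec f \<longrightarrow> (\<lambda>n. P0 f n + P1 f n) = f)"

definition parity_even :: "(nat \<Rightarrow> complex) \<Rightarrow> nat \<Rightarrow> complex" where
  "parity_even f n = (if even n then f n else 0)"
definition parity_odd :: "(nat \<Rightarrow> complex) \<Rightarrow> nat \<Rightarrow> complex" where
  "parity_odd f n = (if odd n then f n else 0)"

section \<open>Two-mode states: nat \<times> nat \<Rightarrow> complex (coefficient of |n>_A |m>_B)\<close>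

definition noon :: "(nat \<Rightarrow> complex) \<Rightarrow> nat \<Rightarrow> nat \<Rightarrow> nat \<times> nat \<Rightarrow> complex" where
  "noon lam x y = (\<lambda>(n, m).
     ((-1) ^ x * lam n * (if m = 0 then 1 else 0) + (-1) ^ y * (if n = 0 then 1 else 0) * lam m)
     / complex_of_real (sqrt (2 * (1 + (-1) ^ (x + y) * (norm (lam 0))^2))))"

text \<open>Matrix element <j,l| U |n,m> of the 50:50 beam splitter determined by
  U|0,0> = |0,0>, U a^dag U^dag = (a^dag+b^dag)/sqrt 2, U b^dag U^dag = (a^dag-b^dag)/sqrt 2, i.e.
  U|n,m> = (a^dag+b^dag)^n (a^dag-b^dag)^m |0,0> / sqrt(n! m! 2^(n+m)).\<close>
definition bs_coeff :: "nat \<Rightarrow> nat \<Rightarrow> nat \<Rightarrow> nat \<Rightarrow> real" where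
  "bs_coeff j l n m =
     (if j + l = n + m then
        (\<Sum>k = 0..n. if k \<le> j \<and> j - k \<le> m then
             real (n choose k) * real (m choose (j - k)) * (-1) ^ (m - (j - k)) else 0)
        * sqrt (fact j * fact l / (fact n * fact m * 2 ^ (n + m)))
      else 0)"

definition beam_splitter :: "(nat \<times> nat \<Rightarrow> complex) \<Rightarrow> nat \<times> nat \<Rightarrow> complex" where
  "beam_splitter \<psi> = (\<lambda>(j, l). \<Sum>n = 0..j + l. complex_of_real (bs_coeff j l n (j + l - n)) * \<psi> (n, j + l - n))"

definition apply_local ::
  "((nat \<Rightarrow> complex) \<Rightarrow> (nat \<Rightarrow> complex)) \<Rightarrow> ((nat \<Rightarrow> complex) \<Rightarrow> (nat \<Rightarrow> complex))
   \<Rightarrow> (nat \<times> nat \<Rightarrow> complex) \<Rightarrow> nat \<times> nat \<Rightarrow> complex" where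
  "apply_local PA PB \<psi> =
     (let \<psi>1 = (\<lambda>(n, m). PA (\<lambda>n'. \<psi> (n', m)) n) in (\<lambda>(n, m). PB (\<lambda>m'. \<psi>1 (n, m')) m))"

definition prob ::
  "((nat \<Rightarrow> complex) \<Rightarrow> (nat \<Rightarrow> complex)) \<Rightarrow> ((nat \<Rightarrow> complex) \<Rightarrow> (nat \<Rightarrow> complex))
   \<Rightarrow> (nat \<Rightarrow> complex) \<Rightarrow> nat \<Rightarrow> nat \<Rightarrow> complex" where
  "prob PA PB lam x y =
     (let \<Phi> = beam_splitter (noon lam x y) in
       infsum (\<lambda>p. cnj (\<Phi> p) * apply_local PA PB \<Phi> p) UNIV)"

definition J_val ::
  "((nat \<Rightarrow> complex) \<Rightarrow> (nat \<Rightarrow> complex)) \<Rightarrow> ((nat \<Rightarrow> complex) \<Rightarrow> (nat \<Rightarrow> complex))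
   \<Rightarrow> ((nat \<Rightarrow> complex) \<Rightarrow> (nat \<Rightarrow> complex)) \<Rightarrow> ((nat \<Rightarrow> complex) \<Rightarrow> (nat \<Rightarrow> complex))
   \<Rightarrow> (nat \<Rightarrow> complex) \<Rightarrow> complex" where
  "J_val PA0 PA1 PB0 PB1 lam =
     (prob PA0 PB0 lam 0 0 + prob PA0 PB0 lam 1 1 + prob PA1 PB1 lam 0 1 + prob PA1 PB1 lam 1 0) / 4"

end

theory Submission
  imports Defs
begin

lemma exp_poly_sums:
  fixes w c0 c1 c2 :: real
  shows "(\<lambda>n. (c0 + c1 * real n + c2 * real n ^ 2) * w ^ n / fact n) sums ((c0 + c1 * w + c2 * (w^2 + w)) * exp w)"
proof -
  have S0: "(\<lambda>n. w ^ n / fact n) sums exp w"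
    using exp_converges[of w] by (simp add: divide_inverse mult.commute)
  have S1: "(\<lambda>n. real n * w ^ n / fact n) sums (w * exp w)"
  proof -
    have "(\<lambda>n. real (Suc n) * w ^ (Suc n) / fact (Suc n)) = (\<lambda>n. w * (w ^ n / fact n))"
      by (rule ext) (simp add: field_simps del: of_nat_Suc)
    hence "(\<lambda>n. real (Suc n) * w ^ (Suc n) / fact (Suc n)) sums (w * exp w)"
      using sums_mult[OF S0, of w] by simp
    thus ?thesis by (subst (asm) sums_Suc_iff) simp
  qed
  have S2: "(\<lambda>n. real n ^ 2 * w ^ n / fact n) sums (w * (w * exp w + exp w))"
  proof -
    have "(\<lambda>n. real (Suc n) ^ 2 * w ^ (Suc n) / fact (Suc n)) = (\<lambda>n. w * (real n * w ^ n / fact n + w ^ n / fact n))"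
    proof (rule ext)
      fix n
      have f: "fact (Suc n) = real (Suc n) * (fact n::real)" by (simp only: fact_Suc)
      have p: "(0::real) < fact n" by simp
      show "real (Suc n) ^ 2 * w ^ (Suc n) / fact (Suc n) = w * (real n * w ^ n / fact n + w ^ n / fact n)"
      proof -
        have q: "(0::real) < real (Suc n)" by simp
        have "real (Suc n) ^ 2 * w ^ (Suc n) / fact (Suc n) = (real (Suc n) * real (Suc n) * (w * w ^ n)) / (real (Suc n) * fact n)"
          unfolding f by (simp only: power2_eq_square power_Suc)
        also have "\<dots> = real (Suc n) * (w * w ^ n) / fact n"
        proof -
          have g: "\<And>t d X::real. t > 0 \<Longrightarrow> t*t*X/(t*d) = t*X/d" by simp
          show ?thesis using g[OF q] by blast
        qed
        also have "\<dots> = w * (real n * w ^ n / fact n + w ^ n / fact n)"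
          using p by (simp add: field_simps)
        finally show ?thesis .
      qed
    qed
    hence "(\<lambda>n. real (Suc n) ^ 2 * w ^ (Suc n) / fact (Suc n)) sums (w * (w * exp w + exp w))"
      using sums_mult[OF sums_add[OF S1 S0], of w] by simp
    thus ?thesis by (subst (asm) sums_Suc_iff) simp
  qed
  have "(\<lambda>n. c0 * (w ^ n / fact n) + c1 * (real n * w ^ n / fact n) + c2 * (real n ^ 2 * w ^ n / fact n))
      sums (c0 * exp w + c1 * (w * exp w) + c2 * (w * (w * exp w + exp w)))"
    by (intro sums_add sums_mult S0 S1 S2)
  moreover have "(\<lambda>n. c0 * (w ^ n / fact n) + c1 * (real n * w ^ n / fact n) + c2 * (real n ^ 2 * w ^ n / fact n))
     = (\<lambda>n. (c0 + c1 * real n + c2 * real n ^ 2) * w ^ n / fact n)"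
    by (rule ext) (simp add: field_simps)
  moreover have "c0 * exp w + c1 * (w * exp w) + c2 * (w * (w * exp w + exp w)) = (c0 + c1 * w + c2 * (w^2 + w)) * exp w"
    by (simp add: field_simps power2_eq_square)
  ultimately show ?thesis by simp
qed

lemma exp_poly_summable_norm:
  fixes w c0 c1 c2 :: real
  shows "summable (\<lambda>n. norm ((c0 + c1 * real n + c2 * real n ^ 2) * w ^ n / fact n))"
proof (rule summable_comparison_test)
  show "summable (\<lambda>n. (\<bar>c0\<bar> + \<bar>c1\<bar> * real n + \<bar>c2\<bar> * real n ^ 2) * \<bar>w\<bar> ^ n / fact n)"
    using exp_poly_sums by (rule sums_summable)
  show "\<exists>N. \<forall>n\<ge>N. norm (norm ((c0 + c1 * real n + c2 * real n ^ 2) * w ^ n / fact n))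
     \<le> (\<bar>c0\<bar> + \<bar>c1\<bar> * real n + \<bar>c2\<bar> * real n ^ 2) * \<bar>w\<bar> ^ n / fact n"
  proof (intro exI allI impI)
    fix n :: nat
    have "\<bar>c0 + c1 * real n + c2 * real n ^ 2\<bar> \<le> \<bar>c0\<bar> + \<bar>c1\<bar> * real n + \<bar>c2\<bar> * real n ^ 2"
      by (auto simp: abs_mult intro!: order.trans[OF abs_triangle_ineq] add_mono)
    hence "\<bar>c0 + c1 * real n + c2 * real n ^ 2\<bar> * \<bar>w\<bar> ^ n / fact n \<le> (\<bar>c0\<bar> + \<bar>c1\<bar> * real n + \<bar>c2\<bar> * real n ^ 2) * \<bar>w\<bar> ^ n / fact n"
      by (intro divide_right_mono mult_right_mono) auto
    thus "norm (norm ((c0 + c1 * real n + c2 * real n ^ 2) * w ^ n / fact n))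
     \<le> (\<bar>c0\<bar> + \<bar>c1\<bar> * real n + \<bar>c2\<bar> * real n ^ 2) * \<bar>w\<bar> ^ n / fact n"
      by (simp add: abs_mult power_abs)
  qed
qed

lemma exp_poly_has_sum:
  fixes w c0 c1 c2 :: real
  shows "((\<lambda>n. complex_of_real ((c0 + c1 * real n + c2 * real n ^ 2) * w ^ n / fact n))
     has_sum complex_of_real ((c0 + c1 * w + c2 * (w^2 + w)) * exp w)) UNIV"
  apply (rule norm_summable_imp_has_sum)
  using exp_poly_summable_norm[of c0 c1 c2 w] apply (simp only: norm_of_real)
   apply (simp add: abs_mult)
  using exp_poly_sums sums_of_real by blast

lemma has_sum_prod2:
  fixes a b :: "nat \<Rightarrow> complex"
  assumes ha: "(a has_sum A) UNIV" and hb: "(b has_sum B) UNIV"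
  shows "((\<lambda>p. b (fst p) * a (snd p)) has_sum (B * A)) UNIV"
proof -
  have na: "(\<lambda>n. norm (a n)) summable_on UNIV"
    using ha summable_on_iff_abs_summable_on_complex has_sum_imp_summable by blast
  have nb: "(\<lambda>n. norm (b n)) summable_on UNIV"
    using hb summable_on_iff_abs_summable_on_complex has_sum_imp_summable by blast
  let ?f = "\<lambda>p. b (fst p) * a (snd p)"
  have "(\<lambda>p. norm (?f p)) summable_on Sigma UNIV (\<lambda>_. UNIV)"
  proof (subst Infinite_Sum.abs_summable_on_Sigma_iff, intro conjI ballI)
    fix j :: nat
    show "(\<lambda>y. norm (?f (j, y))) summable_on UNIV"
      using summable_on_cmult_right[OF na, of "norm (b j)"] by (simp add: norm_mult)
  next
    have "(\<lambda>j. norm (norm (b j) * infsum (\<lambda>n. norm (a n)) UNIV)) summable_on UNIV"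
      using summable_on_cmult_left[OF nb, of "infsum (\<lambda>n. norm (a n)) UNIV"]
      by (simp add: infsum_nonneg)
    moreover have "\<And>j. infsum (\<lambda>y. norm (norm (?f (j, y)))) UNIV = norm (b j) * infsum (\<lambda>n. norm (a n)) UNIV"
      by (simp add: norm_mult infsum_cmult_right')
    ultimately show "(\<lambda>x. norm (infsum (\<lambda>y. norm (?f (x, y))) UNIV)) summable_on UNIV"
      by simp
  qed
  hence "?f summable_on Sigma UNIV (\<lambda>_. UNIV)"
    using summable_on_iff_abs_summable_on_complex by blast
  hence sf: "?f summable_on Sigma UNIV (\<lambda>_::nat. UNIV::nat set)" .
  have "(?f has_sum (B * A)) (Sigma UNIV (\<lambda>_. UNIV))"
  proof (rule has_sum_SigmaI[OF _ _ sf])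
    show "\<And>j. j \<in> UNIV \<Longrightarrow> ((\<lambda>y. ?f (j, y)) has_sum b j * A) UNIV"
      using has_sum_cmult_right[OF ha] by simp
    show "((\<lambda>j. b j * A) has_sum B * A) UNIV"
      using has_sum_cmult_left[OF hb] by simp
  qed
  thus ?thesis by simp
qed


lemma l2vec_zero: "l2vec (\<lambda>_. 0)" by (simp add: l2vec_def)

lemma l2vec_scal: "l2vec f \<Longrightarrow> l2vec (\<lambda>n. c * f n)"
  unfolding l2vec_def by (simp add: norm_mult power_mult_distrib summable_mult)

lemma proj_zero: assumes "is_proj P" shows "P (\<lambda>_. 0) = (\<lambda>_. 0)"
proof -
  have "P (\<lambda>n. (\<lambda>_. 0) n + 1 * (\<lambda>_. 0) n) = (\<lambda>n. P (\<lambda>_. 0) n + 1 * P (\<lambda>_. 0) n)"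
    using assms l2vec_zero unfolding is_proj_def by blast
  hence "\<And>n. P (\<lambda>_. 0) n = P (\<lambda>_. 0) n + P (\<lambda>_. 0) n" by (metis (no_types) add_0 mult_1)
  thus ?thesis by (intro ext) simp
qed

lemma proj_lin2:
  assumes "is_proj P" "l2vec f" "l2vec g"
  shows "P (\<lambda>n. a * f n + b * g n) = (\<lambda>n. a * P f n + b * P g n)"
proof -
  have lin: "\<And>f g c. l2vec f \<Longrightarrow> l2vec g \<Longrightarrow> P (\<lambda>n. f n + c * g n) = (\<lambda>n. P f n + c * P g n)"
    using assms(1) unfolding is_proj_def by blast
  have "P (\<lambda>n. (\<lambda>_. 0) n + a * f n) = (\<lambda>n. P (\<lambda>_. 0) n + a * P f n)"
    by (rule lin[OF l2vec_zero assms(2)])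
  hence s: "P (\<lambda>n. a * f n) = (\<lambda>n. a * P f n)" using proj_zero[OF assms(1)] by simp
  have "P (\<lambda>n. (\<lambda>n. a * f n) n + b * g n) = (\<lambda>n. P (\<lambda>n. a * f n) n + b * P g n)"
    by (rule lin[OF l2vec_scal[OF assms(2)] assms(3)])
  thus ?thesis using s by simp
qed

lemma create_coh:
  assumes "g \<noteq> 0"
  shows "create (coh g) n = of_nat n / g * coh g n"
proof (cases n)
  case 0 thus ?thesis by (simp add: create_def)
next
  case (Suc m)
  have f: "sqrt (fact (Suc m) :: real) = sqrt (real (Suc m)) * sqrt (fact m)"
    by (simp only: fact_Suc of_nat_mult real_sqrt_mult)
  have s: "(of_nat (Suc m) :: complex) = of_real (sqrt (real (Suc m))) * of_real (sqrt (real (Suc m)))"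
    by (simp only: of_real_mult[symmetric] real_sqrt_mult_self of_real_of_nat_eq abs_of_nat)
  have pos: "sqrt (real (Suc m)) \<noteq> 0" "sqrt (fact m :: real) \<noteq> 0" by auto
  have key: "\<And>a b e::complex. a \<noteq> 0 \<Longrightarrow> b \<noteq> 0 \<Longrightarrow> a * (e * g^m / b) = (a*a)/g * (e * (g * g^m) / (a*b))"
    using assms by (simp add: field_simps)
  show ?thesis unfolding Suc create_def coh_def f s
    using key[of "of_real (sqrt (real (Suc m)))" "of_real (sqrt (fact m))"] pos
    by (simp only: of_real_mult power_Suc) simp
qed

lemma cnj_coh_sq:
  "cnj (coh g n) * coh g n = of_real (exp (- (norm g ^ 2) / 2) ^ 2 * (norm g ^ 2) ^ n / fact n)"
proof -
  define E where "E = exp (- (norm g ^ 2) / 2)"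
  define s where "s = sqrt (fact n :: real)"
  have q: "s * s = fact n" unfolding s_def by simp
  have "cnj (coh g n) * coh g n = (of_real E * cnj g ^ n / of_real s) * (of_real E * g ^ n / of_real s)"
    unfolding coh_def E_def s_def by simp
  also have "\<dots> = of_real (E * E) * (cnj g * g) ^ n / of_real (s * s)"
    by (simp add: power_mult_distrib of_real_mult)
  also have "(cnj g * g) = of_real (norm g ^ 2)" by (metis complex_norm_square mult.commute)
  finally show ?thesis unfolding q E_def by (simp add: power2_eq_square)
qed


definition zz :: "complex \<Rightarrow> complex" where "zz \<alpha> = \<alpha> / complex_of_real (sqrt 2)"
definition rho :: "complex \<Rightarrow> real" where "rho \<alpha> = norm (zz \<alpha>) ^ 2"
definition sg :: "nat \<Rightarrow> nat \<Rightarrow> nat \<Rightarrow> complex" where "sg x y l = (-1)^x + (-1)^(y+l)"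
definition DD :: "complex \<Rightarrow> nat \<Rightarrow> real" where
  "DD \<alpha> l = exp (-(norm \<alpha>^2)/2) / (2 * sqrt (1 + norm \<alpha>^2) * sqrt (fact l) * exp (-(norm (zz \<alpha>)^2)/2))"
definition uu :: "complex \<Rightarrow> nat \<Rightarrow> nat \<Rightarrow> nat \<Rightarrow> complex" where
  "uu \<alpha> x y l = sg x y l * of_real (DD \<alpha> l) * zz \<alpha> ^ l"
definition vv :: "complex \<Rightarrow> nat \<Rightarrow> nat \<Rightarrow> nat \<Rightarrow> complex" where
  "vv \<alpha> x y l = uu \<alpha> x y l * (of_real (rho \<alpha>) + of_nat l) / zz \<alpha>"
definition pz :: "complex \<Rightarrow> nat \<Rightarrow> complex" where
  "pz \<alpha> = (\<lambda>n. create (coh (zz \<alpha>)) n - cnj (zz \<alpha>) * coh (zz \<alpha>) n)"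
definition CF :: "complex \<Rightarrow> nat \<Rightarrow> nat \<Rightarrow> nat \<Rightarrow> nat \<Rightarrow> complex" where
  "CF \<alpha> x y j l = sg x y l * of_real (exp (-(norm \<alpha>^2)/2) / (2 * sqrt (1 + norm \<alpha>^2) * sqrt (fact l)))
      * of_nat (j + l) * (zz \<alpha> ^ (j + l) / zz \<alpha>) / of_real (sqrt (fact j))"

lemma zz_nz: "\<alpha> \<noteq> 0 \<Longrightarrow> zz \<alpha> \<noteq> 0" by (simp add: zz_def)

lemma cnj_zz: "\<alpha> \<noteq> 0 \<Longrightarrow> cnj (zz \<alpha>) = of_real (rho \<alpha>) / zz \<alpha>"
  using zz_nz[of \<alpha>] unfolding rho_def
  by (metis complex_norm_square nonzero_mult_div_cancel_left)

lemma pz_eq: "\<alpha> \<noteq> 0 \<Longrightarrow> pz \<alpha> j = (of_nat j - of_real (rho \<alpha>)) / zz \<alpha> * coh (zz \<alpha>) j"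
  unfolding pz_def using create_coh[OF zz_nz, of \<alpha> j] cnj_zz[of \<alpha>] zz_nz[of \<alpha>]
  by (simp add: field_simps)

lemma uv_closed:
  assumes "\<alpha> \<noteq> 0"
  shows "uu \<alpha> x y l * pz \<alpha> j + vv \<alpha> x y l * coh (zz \<alpha>) j = CF \<alpha> x y j l"
proof -
  define z where "z = zz \<alpha>"
  have z: "z \<noteq> 0" using zz_nz[OF assms] z_def by simp
  define Ez where "Ez = exp (-(norm z^2)/2)"
  have DE: "DD \<alpha> l * Ez = exp (-(norm \<alpha>^2)/2) / (2 * sqrt (1 + norm \<alpha>^2) * sqrt (fact l))"
    unfolding DD_def Ez_def z_def by simp
  have "uu \<alpha> x y l * pz \<alpha> j + vv \<alpha> x y l * coh z j
     = sg x y l * of_real (DD \<alpha> l) * z ^ l * ((of_nat j - of_real (rho \<alpha>)) / z + (of_real (rho \<alpha>) + of_nat l) / z) * coh z j"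
    unfolding uu_def vv_def pz_eq[OF assms] z_def[symmetric] by (simp add: algebra_simps)
  also have "\<dots> = sg x y l * of_real (DD \<alpha> l) * z ^ l * (of_nat (j + l) / z) * (of_real Ez * z ^ j / of_real (sqrt (fact j)))"
    unfolding coh_def Ez_def by (simp add: add_divide_distrib[symmetric])
  also have "\<dots> = sg x y l * of_real (DD \<alpha> l * Ez) * of_nat (j + l) * (z ^ (j + l) / z) / of_real (sqrt (fact j))"
    by (simp add: power_add field_simps)
  finally show ?thesis unfolding CF_def DE z_def .
qed


lemma pa0: "photon_added \<alpha> 0 = 0" by (simp add: photon_added_def create_def)

lemma noon_pa: "noon (photon_added \<alpha>) x y (n, m) =
   ((-1)^x * photon_added \<alpha> n * (if m = 0 then 1 else 0) + (-1)^y * (if n = 0 then 1 else 0) * photon_added \<alpha> m)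
   / of_real (sqrt 2)"
  by (simp add: noon_def pa0)

lemma bs1: "bs_coeff j l (j + l) 0 = real ((j + l) choose j) * sqrt (fact j * fact l / (fact (j + l) * 2 ^ (j + l)))"
proof -
  have "(\<Sum>k = 0..j + l. if k \<le> j \<and> j - k \<le> 0 then real ((j + l) choose k) * real (0 choose (j - k)) * (-1) ^ (0 - (j - k)) else 0)
      = (\<Sum>k = 0..j + l. if k = j then real ((j + l) choose j) else 0)"
    by (rule sum.cong) auto
  also have "\<dots> = real ((j + l) choose j)" by simp
  finally show ?thesis unfolding bs_coeff_def by simp
qed

lemma bs2: "bs_coeff j l 0 (j + l) = real ((j + l) choose j) * (-1) ^ l * sqrt (fact j * fact l / (fact (j + l) * 2 ^ (j + l)))"
  unfolding bs_coeff_def by simp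

lemma realid:
  "real ((j + l) choose j) * sqrt (fact j * fact l / (fact (j + l) * 2 ^ (j + l)))
   = sqrt (fact (j + l)) / (sqrt 2 ^ (j + l) * sqrt (fact l) * sqrt (fact j))"
proof -
  define a where "a = sqrt (fact j :: real)"
  define b where "b = sqrt (fact l :: real)"
  define c where "c = sqrt (fact (j+l) :: real)"
  have a: "a > 0" "a * a = fact j" unfolding a_def by auto
  have b: "b > 0" "b * b = fact l" unfolding b_def by auto
  have c: "c > 0" "c * c = fact (j+l)" unfolding c_def by auto
  have ch: "real ((j + l) choose j) = fact (j + l) / (fact j * fact l)"
    using binomial_fact[of j "j+l", where 'a=real] by simp
  have "sqrt (fact j * fact l / (fact (j + l) * 2 ^ (j + l))) = a * b / (c * sqrt 2 ^ (j + l))"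
    unfolding a_def b_def c_def by (simp add: real_sqrt_mult real_sqrt_divide real_sqrt_power)
  hence "real ((j + l) choose j) * sqrt (fact j * fact l / (fact (j + l) * 2 ^ (j + l)))
     = (c * c) / ((a * a) * (b * b)) * (a * b / (c * sqrt 2 ^ (j + l)))"
    unfolding ch a(2) b(2) c(2) by simp
  also have "\<dots> = c / (sqrt 2 ^ (j + l) * b * a)"
    using a(1) b(1) c(1) by (simp add: field_simps)
  finally show ?thesis unfolding a_def b_def c_def .
qed

lemma generic_alg:
  fixes sN sl sj r q K E A \<alpha> N \<sigma> :: complex
  assumes "r * r = 2" "sN \<noteq> 0" "sl \<noteq> 0" "sj \<noteq> 0" "q \<noteq> 0" "K \<noteq> 0" "\<alpha> \<noteq> 0"
  shows "(sN / (q * sl * sj)) * \<sigma> * (N / \<alpha> * (E * A / sN) / K) / r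
       = \<sigma> * (E / (2 * K * sl)) * N * ((A / q) / (\<alpha> / r)) / sj"
proof -
  have r: "r \<noteq> 0" using assms(1) by auto
  have "\<sigma> * (E / (2 * K * sl)) * N * ((A / q) / (\<alpha> / r)) / sj = \<sigma> * (E / ((r * r) * K * sl)) * N * ((A / q) / (\<alpha> / r)) / sj"
    using assms(1) by simp
  also have "\<dots> = (sN / (q * sl * sj)) * \<sigma> * (N / \<alpha> * (E * A / sN) / K) / r"
    using assms r by (simp add: field_simps)
  finally show ?thesis by simp
qed


lemma BS_closed:
  assumes "\<alpha> \<noteq> 0"
  shows "beam_splitter (noon (photon_added \<alpha>) x y) (j, l) = CF \<alpha> x y j l"
proof -
  let ?\<psi> = "noon (photon_added \<alpha>) x y"
  let ?pa = "photon_added \<alpha>"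
  have bs: "beam_splitter ?\<psi> (j, l) = (\<Sum>n = 0..j + l. of_real (bs_coeff j l n (j + l - n)) * ?\<psi> (n, j + l - n))"
    by (simp add: beam_splitter_def)
  show ?thesis
  proof (cases "j + l = 0")
    case True
    hence "j = 0" "l = 0" by auto
    thus ?thesis unfolding bs by (simp add: noon_pa pa0 CF_def)
  next
    case False
    define N where "N = j + l"
    have N: "N \<noteq> 0" using False N_def by simp
    define T1 where "T1 = of_real (bs_coeff j l N 0) * ((-1)^x * ?pa N / of_real (sqrt 2))"
    define T2 where "T2 = of_real (bs_coeff j l 0 N) * ((-1)^y * ?pa N / of_real (sqrt 2))"
    have summand: "of_real (bs_coeff j l n (N - n)) * ?\<psi> (n, N - n)
        = (if n = N then T1 else 0) + (if n = 0 then T2 else 0)" if "n \<in> {0..N}" for n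
    proof -
      consider "n = N" | "n = 0" | "n \<noteq> N \<and> n \<noteq> 0" by blast
      thus ?thesis
      proof cases
        case 1 thus ?thesis using N by (simp add: noon_pa T1_def)
      next
        case 2 thus ?thesis using N by (simp add: noon_pa T2_def pa0)
      next
        case 3 thus ?thesis using that by (simp add: noon_pa)
      qed
    qed
    have "beam_splitter ?\<psi> (j, l) = (\<Sum>n = 0..N. (if n = N then T1 else 0) + (if n = 0 then T2 else 0))"
      unfolding bs N_def[symmetric] by (rule sum.cong[OF refl summand])
    also have "\<dots> = T1 + T2" by (simp add: sum.distrib)
    finally have L: "beam_splitter ?\<psi> (j, l) = T1 + T2" .
    define S where "S = sqrt (fact N) / (sqrt 2 ^ N * sqrt (fact l) * sqrt (fact j))"
    have b1: "bs_coeff j l N 0 = S" unfolding N_def S_def bs1 realid ..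
    have b2: "bs_coeff j l 0 N = (-1) ^ l * S" unfolding N_def S_def bs2 realid[symmetric] by simp
    have "T1 + T2 = of_real S * sg x y l * ?pa N / of_real (sqrt 2)"
      unfolding T1_def T2_def b1 b2 sg_def by (simp add: power_add field_simps)
    also have "?pa N = of_nat N / \<alpha> * (of_real (exp (- (norm \<alpha> ^ 2) / 2)) * \<alpha> ^ N / of_real (sqrt (fact N))) / of_real (sqrt (1 + norm \<alpha> ^ 2))"
      unfolding photon_added_def create_coh[OF assms] coh_def ..
    finally have R: "T1 + T2 = of_real S * sg x y l * (of_nat N / \<alpha> * (of_real (exp (- (norm \<alpha> ^ 2) / 2)) * \<alpha> ^ N / of_real (sqrt (fact N))) / of_real (sqrt (1 + norm \<alpha> ^ 2))) / of_real (sqrt 2)" .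
    have S': "(of_real S :: complex) = of_real (sqrt (fact N)) / (of_real (sqrt 2) ^ N * of_real (sqrt (fact l)) * of_real (sqrt (fact j)))"
      unfolding S_def by (simp only: of_real_divide of_real_mult of_real_power)
    have CF': "CF \<alpha> x y j l = sg x y l * (of_real (exp (- (norm \<alpha> ^ 2) / 2)) / (2 * of_real (sqrt (1 + norm \<alpha> ^ 2)) * of_real (sqrt (fact l))))
        * of_nat N * ((\<alpha> ^ N / of_real (sqrt 2) ^ N) / (\<alpha> / of_real (sqrt 2))) / of_real (sqrt (fact j))"
      unfolding CF_def zz_def N_def[symmetric] by (simp add: power_divide)
    have r2: "complex_of_real (sqrt 2) * complex_of_real (sqrt 2) = 2"
      by (simp only: of_real_mult[symmetric] real_sqrt_mult_self) simp
    have K0: "1 + norm \<alpha> ^ 2 > (0::real)" by (simp add: add_pos_nonneg)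
    hence K: "complex_of_real (sqrt (1 + norm \<alpha> ^ 2)) \<noteq> 0" by simp
    show ?thesis unfolding L R S' CF'
      by (rule generic_alg[OF r2 _ _ _ _ K assms]) auto
  qed
qed


lemma BS_uv:
  assumes "\<alpha> \<noteq> 0"
  shows "beam_splitter (noon (photon_added \<alpha>) x y)
     = (\<lambda>p. uu \<alpha> x y (snd p) * pz \<alpha> (fst p) + vv \<alpha> x y (snd p) * coh (zz \<alpha>) (fst p))"
  by (rule ext) (auto simp: BS_closed[OF assms] uv_closed[OF assms])

lemma exp_half_sq: "exp (- (r::real) / 2) ^ 2 = exp (- r)"
  by (simp add: power2_eq_square exp_add[symmetric])

lemma cz_sq: "cnj (coh (zz \<alpha>) j) * coh (zz \<alpha>) j
   = of_real ((exp (- rho \<alpha>) + 0 * real j + 0 * real j ^ 2) * rho \<alpha> ^ j / fact j)"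
  unfolding cnj_coh_sq rho_def exp_half_sq by simp

lemma rho_pos: "\<alpha> \<noteq> 0 \<Longrightarrow> rho \<alpha> > 0"
  unfolding rho_def using zz_nz by simp

lemma pz_sq:
  assumes "\<alpha> \<noteq> 0"
  shows "cnj (pz \<alpha> j) * pz \<alpha> j
   = of_real ((exp (- rho \<alpha>) * rho \<alpha> + (- 2 * exp (- rho \<alpha>)) * real j + (exp (- rho \<alpha>) / rho \<alpha>) * real j ^ 2) * rho \<alpha> ^ j / fact j)"
proof -
  define r where "r = rho \<alpha>"
  define z where "z = zz \<alpha>"
  have r: "r > 0" using rho_pos[OF assms] r_def by simp
  have zc: "z * cnj z = of_real r" unfolding r_def z_def rho_def by (metis complex_norm_square)
  have z: "z \<noteq> 0" using zz_nz[OF assms] z_def by simp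
  have "cnj (pz \<alpha> j) * pz \<alpha> j = (of_nat j - of_real r) * (of_nat j - of_real r) / (z * cnj z) * (cnj (coh z j) * coh z j)"
    unfolding pz_eq[OF assms] r_def[symmetric] z_def[symmetric] by (simp add: field_simps)
  also have "\<dots> = of_real ((real j - r) * (real j - r) / r) * of_real (exp (- r) * r ^ j / fact j)"
    unfolding zc using cz_sq[of \<alpha> j] unfolding z_def[symmetric] r_def[symmetric] by simp
  also have "\<dots> = of_real ((exp (- r) * r + (- 2 * exp (- r)) * real j + (exp (- r) / r) * real j ^ 2) * r ^ j / fact j)"
    unfolding of_real_mult[symmetric] using r by (simp add: field_simps power2_eq_square)
  finally show ?thesis unfolding r_def .
qed

lemma cz_pz:
  assumes "\<alpha> \<noteq> 0"
  shows "cnj (coh (zz \<alpha>) j) * pz \<alpha> j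
   = (1 / zz \<alpha>) * of_real ((- exp (- rho \<alpha>) * rho \<alpha> + exp (- rho \<alpha>) * real j + 0 * real j ^ 2) * rho \<alpha> ^ j / fact j)"
proof -
  have "cnj (coh (zz \<alpha>) j) * pz \<alpha> j = (of_nat j - of_real (rho \<alpha>)) / zz \<alpha> * (cnj (coh (zz \<alpha>) j) * coh (zz \<alpha>) j)"
    unfolding pz_eq[OF assms] by (simp add: field_simps)
  also have "\<dots> = (1 / zz \<alpha>) * (of_real (real j - rho \<alpha>) * of_real (exp (- rho \<alpha>) * rho \<alpha> ^ j / fact j))"
    unfolding cz_sq by simp
  finally show ?thesis unfolding of_real_mult[symmetric] by (simp add: field_simps)
qed

lemma pz_cz:
  assumes "\<alpha> \<noteq> 0"
  shows "cnj (pz \<alpha> j) * coh (zz \<alpha>) j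
   = (1 / cnj (zz \<alpha>)) * of_real ((- exp (- rho \<alpha>) * rho \<alpha> + exp (- rho \<alpha>) * real j + 0 * real j ^ 2) * rho \<alpha> ^ j / fact j)"
proof -
  have "cnj (pz \<alpha> j) * coh (zz \<alpha>) j = cnj (cnj (coh (zz \<alpha>) j) * pz \<alpha> j)" by simp
  also have "\<dots> = (1 / cnj (zz \<alpha>)) * of_real ((- exp (- rho \<alpha>) * rho \<alpha> + exp (- rho \<alpha>) * real j + 0 * real j ^ 2) * rho \<alpha> ^ j / fact j)"
    unfolding cz_pz[OF assms] by simp
  finally show ?thesis .
qed

lemma exp_cancel: "exp (- r) * exp (r::real) = 1" by (simp add: exp_minus field_simps)

lemma J1: "((\<lambda>j. cnj (coh (zz \<alpha>) j) * coh (zz \<alpha>) j) has_sum 1) UNIV"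
  unfolding cz_sq using exp_poly_has_sum[of "exp (- rho \<alpha>)" 0 0 "rho \<alpha>"] by (simp add: exp_cancel)

lemma J2: assumes "\<alpha> \<noteq> 0" shows "((\<lambda>j. cnj (pz \<alpha> j) * pz \<alpha> j) has_sum 1) UNIV"
proof -
  have r: "rho \<alpha> > 0" using rho_pos[OF assms] .
  have e: "(exp (- rho \<alpha>) * rho \<alpha> + (- 2 * exp (- rho \<alpha>)) * rho \<alpha> + (exp (- rho \<alpha>) / rho \<alpha>) * ((rho \<alpha>)^2 + rho \<alpha>)) * exp (rho \<alpha>) = 1"
    using r by (simp add: field_simps power2_eq_square exp_minus)
  show ?thesis unfolding pz_sq[OF assms] using exp_poly_has_sum[of "exp (- rho \<alpha>) * rho \<alpha>" "- 2 * exp (- rho \<alpha>)" "exp (- rho \<alpha>) / rho \<alpha>" "rho \<alpha>"]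
    unfolding e by simp
qed

lemma J3: assumes "\<alpha> \<noteq> 0" shows "((\<lambda>j. cnj (coh (zz \<alpha>) j) * pz \<alpha> j) has_sum 0) UNIV"
  unfolding cz_pz[OF assms]
  using has_sum_cmult_right[OF exp_poly_has_sum[of "- exp (- rho \<alpha>) * rho \<alpha>" "exp (- rho \<alpha>)" 0 "rho \<alpha>"], of "1 / zz \<alpha>"]
  by simp

lemma J4: assumes "\<alpha> \<noteq> 0" shows "((\<lambda>j. cnj (pz \<alpha> j) * coh (zz \<alpha>) j) has_sum 0) UNIV"
  unfolding pz_cz[OF assms]
  using has_sum_cmult_right[OF exp_poly_has_sum[of "- exp (- rho \<alpha>) * rho \<alpha>" "exp (- rho \<alpha>)" 0 "rho \<alpha>"], of "1 / cnj (zz \<alpha>)"]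
  by simp

lemma l2vec_from: assumes "((\<lambda>j. cnj (f j) * f j) has_sum S) UNIV" shows "l2vec f"
proof -
  have "(\<lambda>j. cnj (f j) * f j) summable_on UNIV" using assms has_sum_imp_summable by blast
  hence "(\<lambda>j. norm (cnj (f j) * f j)) summable_on UNIV"
    using summable_on_iff_abs_summable_on_complex[of "\<lambda>j. cnj (f j) * f j" UNIV] by simp
  hence "summable (\<lambda>j. norm (cnj (f j) * f j))" by (rule summable_on_imp_summable)
  thus ?thesis unfolding l2vec_def by (simp add: norm_mult power2_eq_square)
qed


definition cc :: "complex \<Rightarrow> real" where "cc \<alpha> = exp (- rho \<alpha>) / (4 * (1 + 2 * rho \<alpha>))"

lemma rho_alt: "rho \<alpha> = norm \<alpha> ^ 2 / 2"
  unfolding rho_def zz_def by (simp add: norm_divide power_divide)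

lemma sg_real: "sg x y l = of_real ((-1)^x + (-1)^(y+l))"
  unfolding sg_def by simp

lemma neg1_sq: "(-1::real)^x * (-1)^x = 1"
  by (simp add: power_add[symmetric])

lemma sg_sq: "cnj (sg x y l) * sg x y l = of_real (2 + 2 * (-1)^(x+y) * (-1)^l)"
proof -
  have "((-1::real)^x + (-1)^(y+l)) * ((-1)^x + (-1)^(y+l)) = (-1)^x * (-1)^x + (-1)^y * (-1)^y * ((-1)^l * (-1)^l) + 2 * (-1)^(x+y) * (-1)^l"
    by (simp add: power_add algebra_simps)
  also have "\<dots> = 2 + 2 * (-1)^(x+y) * (-1)^l" by (simp add: neg1_sq)
  finally have e: "((-1::real)^x + (-1)^(y+l)) * ((-1)^x + (-1)^(y+l)) = 2 + 2 * (-1)^(x+y) * (-1)^l" .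
  show ?thesis unfolding sg_real complex_cnj_complex_of_real of_real_mult[symmetric] e ..
qed

lemma uu_sq:
  "cnj (uu \<alpha> x y l) * uu \<alpha> x y l = cnj (sg x y l) * sg x y l * of_real (cc \<alpha> * rho \<alpha> ^ l / fact l)"
proof -
  have zc: "cnj (zz \<alpha>) * zz \<alpha> = of_real (rho \<alpha>)" unfolding rho_def by (metis complex_norm_square mult.commute)
  have K0: "1 + norm \<alpha> ^ 2 > (0::real)" by (simp add: add_pos_nonneg)
  have D2: "DD \<alpha> l * DD \<alpha> l = cc \<alpha> / fact l"
  proof -
    have g: "\<And>a b c d::real. (a/(2*b*c*d)) * (a/(2*b*c*d)) = (a*a)/(4*(b*b)*(c*c)*(d*d))"
    proof -
      fix a b c d :: real
      have "(a/(2*b*c*d)) * (a/(2*b*c*d)) = (a*a)/((2*b*c*d)*(2*b*c*d))" by (rule times_divide_times_eq)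
      also have "(2*b*c*d)*(2*b*c*d) = 4*(b*b)*(c*c)*(d*d)" by (simp add: algebra_simps)
      finally show "(a/(2*b*c*d)) * (a/(2*b*c*d)) = (a*a)/(4*(b*b)*(c*c)*(d*d))" .
    qed
    have "DD \<alpha> l * DD \<alpha> l = exp (- (norm \<alpha> ^ 2) / 2) ^ 2 / (4 * (1 + norm \<alpha> ^ 2) * fact l * exp (- (norm (zz \<alpha>) ^ 2) / 2) ^ 2)"
      unfolding DD_def g using K0 by (simp add: power2_eq_square)
    also have "\<dots> = exp (- (2 * rho \<alpha>)) / (4 * (1 + 2 * rho \<alpha>) * fact l * exp (- rho \<alpha>))"
      unfolding exp_half_sq by (simp add: rho_alt rho_def[symmetric])
    also have "\<dots> = cc \<alpha> / fact l"
    proof -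
      have e2: "exp (- (2 * rho \<alpha>)) = exp (- rho \<alpha>) * exp (- rho \<alpha>)" by (simp add: exp_add[symmetric])
      have p: "1 + 2 * rho \<alpha> > 0" unfolding rho_def by (simp add: add_pos_nonneg)
      have g2: "\<And>E A F::real. E \<noteq> 0 \<Longrightarrow> E*E/(A*F*E) = E/A/F"
        by (metis divide_divide_eq_left nonzero_mult_divide_mult_cancel_right)
      show ?thesis unfolding e2 cc_def by (rule g2) simp
    qed
    finally show ?thesis .
  qed
  have "cnj (uu \<alpha> x y l) * uu \<alpha> x y l = cnj (sg x y l) * sg x y l * of_real (DD \<alpha> l * DD \<alpha> l) * (cnj (zz \<alpha>) * zz \<alpha>) ^ l"
    unfolding uu_def by (simp add: power_mult_distrib)
  also have "\<dots> = cnj (sg x y l) * sg x y l * of_real (cc \<alpha> * rho \<alpha> ^ l / fact l)"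
    unfolding D2 zc by simp
  finally show ?thesis .
qed

lemma l_has_sum:
  fixes w s c0 c1 c2 :: real
  shows "((\<lambda>l. complex_of_real ((1 + s * (-1)^l) * ((c0 + c1 * real l + c2 * real l ^ 2) * w ^ l / fact l)))
    has_sum complex_of_real ((c0 + c1 * w + c2 * (w^2 + w)) * exp w + s * ((c0 + c1 * (-w) + c2 * ((-w)^2 + (-w))) * exp (-w)))) UNIV"
proof -
  have "((\<lambda>l. complex_of_real ((c0 + c1 * real l + c2 * real l ^ 2) * w ^ l / fact l)
      + of_real s * complex_of_real ((c0 + c1 * real l + c2 * real l ^ 2) * (-w) ^ l / fact l))
    has_sum (complex_of_real ((c0 + c1 * w + c2 * (w^2 + w)) * exp w) + of_real s * complex_of_real ((c0 + c1 * (-w) + c2 * ((-w)^2 + (-w))) * exp (-w)))) UNIV"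
    by (intro has_sum_add has_sum_cmult_right exp_poly_has_sum)
  moreover have "(\<lambda>l. complex_of_real ((c0 + c1 * real l + c2 * real l ^ 2) * w ^ l / fact l)
      + of_real s * complex_of_real ((c0 + c1 * real l + c2 * real l ^ 2) * (-w) ^ l / fact l))
      = (\<lambda>l. complex_of_real ((1 + s * (-1)^l) * ((c0 + c1 * real l + c2 * real l ^ 2) * w ^ l / fact l)))"
  proof (rule ext)
    fix l
    show "complex_of_real ((c0 + c1 * real l + c2 * real l ^ 2) * w ^ l / fact l)
      + of_real s * complex_of_real ((c0 + c1 * real l + c2 * real l ^ 2) * (-w) ^ l / fact l)
      = complex_of_real ((1 + s * (-1)^l) * ((c0 + c1 * real l + c2 * real l ^ 2) * w ^ l / fact l))"
  proof -
    have r: "(c0 + c1 * real l + c2 * real l ^ 2) * w ^ l / fact l + s * ((c0 + c1 * real l + c2 * real l ^ 2) * (-w) ^ l / fact l)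
      = (1 + s * (-1)^l) * ((c0 + c1 * real l + c2 * real l ^ 2) * w ^ l / fact l)"
      unfolding power_minus[of w l] by (simp add: algebra_simps add_divide_distrib)
    show ?thesis unfolding r[symmetric] by simp
  qed
  qed
  moreover have "complex_of_real ((c0 + c1 * w + c2 * (w^2 + w)) * exp w) + of_real s * complex_of_real ((c0 + c1 * (-w) + c2 * ((-w)^2 + (-w))) * exp (-w))
     = complex_of_real ((c0 + c1 * w + c2 * (w^2 + w)) * exp w + s * ((c0 + c1 * (-w) + c2 * ((-w)^2 + (-w))) * exp (-w)))"
    by (simp only: of_real_mult[symmetric] of_real_add[symmetric])
  ultimately show ?thesis by simp
qed


locale setup_ctx =
  fixes \<alpha> :: complex and PA0 PA1 :: "(nat \<Rightarrow> complex) \<Rightarrow> (nat \<Rightarrow> complex)"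
  assumes anz: "\<alpha> \<noteq> 0"
    and pvm: "two_outcome_pvm PA0 PA1"
    and P1c: "PA1 (coh (zz \<alpha>)) = coh (zz \<alpha>)"
    and P0p: "PA0 (pz \<alpha>) = pz \<alpha>"
begin

lemma l2c: "l2vec (coh (zz \<alpha>))" using J1 by (rule l2vec_from)
lemma l2p: "l2vec (pz \<alpha>)" using J2[OF anz] by (rule l2vec_from)

lemma proj0: "is_proj PA0" and proj1: "is_proj PA1"
  using pvm unfolding two_outcome_pvm_def by auto

lemma sumid: "l2vec f \<Longrightarrow> PA0 f n + PA1 f n = f n"
  using pvm unfolding two_outcome_pvm_def by metis

lemma P0c: "PA0 (coh (zz \<alpha>)) = (\<lambda>_. 0)"
  using sumid[OF l2c] P1c by (intro ext) (metis add_cancel_left_left)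

lemma P1p: "PA1 (pz \<alpha>) = (\<lambda>_. 0)"
  using sumid[OF l2p] P0p by (intro ext) (metis add_cancel_right_right)

lemma lin0: "PA0 (\<lambda>n. a * pz \<alpha> n + b * coh (zz \<alpha>) n) = (\<lambda>n. a * pz \<alpha> n)"
  using proj_lin2[OF proj0 l2p l2c] P0p P0c by simp

lemma lin1: "PA1 (\<lambda>n. a * pz \<alpha> n + b * coh (zz \<alpha>) n) = (\<lambda>n. b * coh (zz \<alpha>) n)"
  using proj_lin2[OF proj1 l2p l2c] P1p P1c by simp

lemma app0: "apply_local PA0 parity_even (beam_splitter (noon (photon_added \<alpha>) x y))
   = (\<lambda>p. if even (snd p) then uu \<alpha> x y (snd p) * pz \<alpha> (fst p) else 0)"
proof (rule ext)
  fix p :: "nat \<times> nat"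
  obtain n m where p: "p = (n, m)" by fastforce
  show "apply_local PA0 parity_even (beam_splitter (noon (photon_added \<alpha>) x y)) p
     = (if even (snd p) then uu \<alpha> x y (snd p) * pz \<alpha> (fst p) else 0)"
    unfolding p apply_local_def Let_def parity_even_def BS_uv[OF anz] by (simp add: lin0)
qed

lemma app1: "apply_local PA1 parity_odd (beam_splitter (noon (photon_added \<alpha>) x y))
   = (\<lambda>p. if odd (snd p) then vv \<alpha> x y (snd p) * coh (zz \<alpha>) (fst p) else 0)"
proof (rule ext)
  fix p :: "nat \<times> nat"
  obtain n m where p: "p = (n, m)" by fastforce
  show "apply_local PA1 parity_odd (beam_splitter (noon (photon_added \<alpha>) x y)) p
     = (if odd (snd p) then vv \<alpha> x y (snd p) * coh (zz \<alpha>) (fst p) else 0)"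
    unfolding p apply_local_def Let_def parity_odd_def BS_uv[OF anz] by (simp add: lin1)
qed

end


context setup_ctx begin

lemma rpos: "rho \<alpha> > 0" using rho_pos[OF anz] .

lemma zc: "cnj (zz \<alpha>) * zz \<alpha> = of_real (rho \<alpha>)"
  unfolding rho_def by (metis complex_norm_square mult.commute)

definition G :: "nat \<Rightarrow> nat \<Rightarrow> nat \<Rightarrow> real" where
  "G x y l = (2 + 2 * (-1)^(x+y) * (-1)^l) * (cc \<alpha> * rho \<alpha> ^ l / fact l)"

lemma uuG: "cnj (uu \<alpha> x y l) * uu \<alpha> x y l = of_real (G x y l)"
  unfolding uu_sq sg_sq G_def by simp

lemma vuG: "cnj (vv \<alpha> x y l) * uu \<alpha> x y l = (1 / cnj (zz \<alpha>)) * of_real (G x y l * (rho \<alpha> + real l))"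
proof -
  have "cnj (vv \<alpha> x y l) * uu \<alpha> x y l = (cnj (uu \<alpha> x y l) * uu \<alpha> x y l) * (of_real (rho \<alpha>) + of_nat l) / cnj (zz \<alpha>)"
    unfolding vv_def by simp
  thus ?thesis unfolding uuG by simp
qed

lemma uvG: "cnj (uu \<alpha> x y l) * vv \<alpha> x y l = (1 / zz \<alpha>) * of_real (G x y l * (rho \<alpha> + real l))"
proof -
  have "cnj (uu \<alpha> x y l) * vv \<alpha> x y l = (cnj (uu \<alpha> x y l) * uu \<alpha> x y l) * (of_real (rho \<alpha>) + of_nat l) / zz \<alpha>"
    unfolding vv_def by simp
  thus ?thesis unfolding uuG by simp
qed

lemma vvG: "cnj (vv \<alpha> x y l) * vv \<alpha> x y l = of_real (G x y l * (rho \<alpha> + real l)^2 / rho \<alpha>)"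
proof -
  have "cnj (vv \<alpha> x y l) * vv \<alpha> x y l = (cnj (uu \<alpha> x y l) * uu \<alpha> x y l) * ((of_real (rho \<alpha>) + of_nat l) * (of_real (rho \<alpha>) + of_nat l)) / (cnj (zz \<alpha>) * zz \<alpha>)"
    unfolding vv_def by simp
  thus ?thesis unfolding uuG zc by (simp add: power2_eq_square)
qed

lemma even_sign: "even (x + y) \<Longrightarrow> (-1::real) ^ (x + y) = 1" by simp
lemma odd_sign: "odd (x + y) \<Longrightarrow> (-1::real) ^ (x + y) = -1" by simp

lemma a1_eq: assumes "even (x + y)"
  shows "(if even l then cnj (uu \<alpha> x y l) * uu \<alpha> x y l else 0)
    = of_real ((1 + 1 * (-1)^l) * ((2 * cc \<alpha> + 0 * real l + 0 * real l ^ 2) * rho \<alpha> ^ l / fact l))"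
  unfolding uuG G_def using assms by (cases "even l") auto

lemma a2_eq: assumes "even (x + y)"
  shows "(if even l then cnj (vv \<alpha> x y l) * uu \<alpha> x y l else 0)
    = (1 / cnj (zz \<alpha>)) * of_real ((1 + 1 * (-1)^l) * ((2 * cc \<alpha> * rho \<alpha> + 2 * cc \<alpha> * real l + 0 * real l ^ 2) * rho \<alpha> ^ l / fact l))"
  unfolding vuG G_def using assms by (cases "even l") (auto simp: algebra_simps)

lemma b1_eq: assumes "odd (x + y)"
  shows "(if odd l then cnj (vv \<alpha> x y l) * vv \<alpha> x y l else 0)
    = of_real ((1 + (-1) * (-1)^l) * ((2 * cc \<alpha> * rho \<alpha> + 4 * cc \<alpha> * real l + (2 * cc \<alpha> / rho \<alpha>) * real l ^ 2) * rho \<alpha> ^ l / fact l))"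
proof (cases "even l")
  case True thus ?thesis unfolding vvG G_def using assms by simp
next
  case False
  have "G x y l * (rho \<alpha> + real l)^2 / rho \<alpha> = 2 * ((2 * cc \<alpha> * rho \<alpha> + 4 * cc \<alpha> * real l + (2 * cc \<alpha> / rho \<alpha>) * real l ^ 2) * rho \<alpha> ^ l / fact l)"
    unfolding G_def using assms False rpos by (simp add: field_simps power2_eq_square)
  thus ?thesis unfolding vvG using False by simp
qed

lemma b2_eq: assumes "odd (x + y)"
  shows "(if odd l then cnj (uu \<alpha> x y l) * vv \<alpha> x y l else 0)
    = (1 / zz \<alpha>) * of_real ((1 + (-1) * (-1)^l) * ((2 * cc \<alpha> * rho \<alpha> + 2 * cc \<alpha> * real l + 0 * real l ^ 2) * rho \<alpha> ^ l / fact l))"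
  unfolding uvG G_def using assms by (cases "even l") (auto simp: algebra_simps)

end


context setup_ctx begin

lemma prob_even:
  assumes "even (x + y)"
  shows "prob PA0 parity_even (photon_added \<alpha>) x y
    = of_real ((2 * cc \<alpha> + 0 * rho \<alpha> + 0 * (rho \<alpha>^2 + rho \<alpha>)) * exp (rho \<alpha>)
        + 1 * ((2 * cc \<alpha> + 0 * (- rho \<alpha>) + 0 * ((- rho \<alpha>)^2 + (- rho \<alpha>))) * exp (- rho \<alpha>)))"
proof -
  let ?a1 = "\<lambda>l. if even l then cnj (uu \<alpha> x y l) * uu \<alpha> x y l else 0"
  let ?a2 = "\<lambda>l. if even l then cnj (vv \<alpha> x y l) * uu \<alpha> x y l else 0"
  let ?b1 = "\<lambda>j. cnj (pz \<alpha> j) * pz \<alpha> j"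
  let ?b2 = "\<lambda>j. cnj (coh (zz \<alpha>) j) * pz \<alpha> j"
  let ?V = "complex_of_real ((2 * cc \<alpha> + 0 * rho \<alpha> + 0 * (rho \<alpha>^2 + rho \<alpha>)) * exp (rho \<alpha>)
        + 1 * ((2 * cc \<alpha> + 0 * (- rho \<alpha>) + 0 * ((- rho \<alpha>)^2 + (- rho \<alpha>))) * exp (- rho \<alpha>)))"
  have ha1: "(?a1 has_sum ?V) UNIV"
    unfolding a1_eq[OF assms] by (rule l_has_sum)
  obtain A2 where ha2: "(?a2 has_sum A2) UNIV"
    unfolding a2_eq[OF assms] using has_sum_cmult_right[OF l_has_sum] by blast
  have hs: "((\<lambda>p. ?b1 (fst p) * ?a1 (snd p) + ?b2 (fst p) * ?a2 (snd p)) has_sum (1 * ?V + 0 * A2)) UNIV"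
    by (intro has_sum_add has_sum_prod2 ha1 ha2 J2[OF anz] J3[OF anz])
  have eq: "(\<lambda>p. cnj (uu \<alpha> x y (snd p) * pz \<alpha> (fst p) + vv \<alpha> x y (snd p) * coh (zz \<alpha>) (fst p))
       * (if even (snd p) then uu \<alpha> x y (snd p) * pz \<alpha> (fst p) else 0))
     = (\<lambda>p. ?b1 (fst p) * ?a1 (snd p) + ?b2 (fst p) * ?a2 (snd p))"
    by (rule ext) (simp add: algebra_simps)
  show ?thesis unfolding prob_def Let_def app0 unfolding BS_uv[OF anz] eq
    using hs by (simp add: infsumI)
qed

lemma prob_odd:
  assumes "odd (x + y)"
  shows "prob PA1 parity_odd (photon_added \<alpha>) x y
    = of_real ((2 * cc \<alpha> * rho \<alpha> + 4 * cc \<alpha> * rho \<alpha> + (2 * cc \<alpha> / rho \<alpha>) * (rho \<alpha>^2 + rho \<alpha>)) * exp (rho \<alpha>)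
        + (-1) * ((2 * cc \<alpha> * rho \<alpha> + 4 * cc \<alpha> * (- rho \<alpha>) + (2 * cc \<alpha> / rho \<alpha>) * ((- rho \<alpha>)^2 + (- rho \<alpha>))) * exp (- rho \<alpha>)))"
proof -
  let ?a1 = "\<lambda>l. if odd l then cnj (vv \<alpha> x y l) * vv \<alpha> x y l else 0"
  let ?a2 = "\<lambda>l. if odd l then cnj (uu \<alpha> x y l) * vv \<alpha> x y l else 0"
  let ?b1 = "\<lambda>j. cnj (coh (zz \<alpha>) j) * coh (zz \<alpha>) j"
  let ?b2 = "\<lambda>j. cnj (pz \<alpha> j) * coh (zz \<alpha>) j"
  let ?V = "complex_of_real ((2 * cc \<alpha> * rho \<alpha> + 4 * cc \<alpha> * rho \<alpha> + (2 * cc \<alpha> / rho \<alpha>) * (rho \<alpha>^2 + rho \<alpha>)) * exp (rho \<alpha>)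
        + (-1) * ((2 * cc \<alpha> * rho \<alpha> + 4 * cc \<alpha> * (- rho \<alpha>) + (2 * cc \<alpha> / rho \<alpha>) * ((- rho \<alpha>)^2 + (- rho \<alpha>))) * exp (- rho \<alpha>)))"
  have ha1: "(?a1 has_sum ?V) UNIV"
    unfolding b1_eq[OF assms] by (rule l_has_sum)
  obtain A2 where ha2: "(?a2 has_sum A2) UNIV"
    unfolding b2_eq[OF assms] using has_sum_cmult_right[OF l_has_sum] by blast
  have hs: "((\<lambda>p. ?b1 (fst p) * ?a1 (snd p) + ?b2 (fst p) * ?a2 (snd p)) has_sum (1 * ?V + 0 * A2)) UNIV"
    by (intro has_sum_add has_sum_prod2 ha1 ha2 J1 J4[OF anz])
  have eq: "(\<lambda>p. cnj (uu \<alpha> x y (snd p) * pz \<alpha> (fst p) + vv \<alpha> x y (snd p) * coh (zz \<alpha>) (fst p))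
       * (if odd (snd p) then vv \<alpha> x y (snd p) * coh (zz \<alpha>) (fst p) else 0))
     = (\<lambda>p. ?b1 (fst p) * ?a1 (snd p) + ?b2 (fst p) * ?a2 (snd p))"
    by (rule ext) (simp add: algebra_simps)
  show ?thesis unfolding prob_def Let_def app1 unfolding BS_uv[OF anz] eq
    using hs by (simp add: infsumI)
qed

end


lemma val_even: assumes "\<alpha> \<noteq> 0"
  shows "(2 * cc \<alpha> + 0 * rho \<alpha> + 0 * (rho \<alpha>^2 + rho \<alpha>)) * exp (rho \<alpha>)
        + 1 * ((2 * cc \<alpha> + 0 * (- rho \<alpha>) + 0 * ((- rho \<alpha>)^2 + (- rho \<alpha>))) * exp (- rho \<alpha>))
   = (1 + exp (- (norm \<alpha> ^ 2))) / (2 * (1 + (norm \<alpha>)^2))"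
proof -
  define a where "a = norm \<alpha> ^ 2"
  have r: "rho \<alpha> = a / 2" unfolding a_def rho_alt ..
  have a: "a \<ge> 0" unfolding a_def by simp
  have e1: "exp (- (a/2)) * exp (a/2) = 1" by (simp add: exp_minus)
  have e2: "exp (- (a/2)) * exp (- (a/2)) = exp (- a)" by (simp add: exp_add[symmetric])
  have "(2 * cc \<alpha> + 0 * rho \<alpha> + 0 * (rho \<alpha>^2 + rho \<alpha>)) * exp (rho \<alpha>)
        + 1 * ((2 * cc \<alpha> + 0 * (- rho \<alpha>) + 0 * ((- rho \<alpha>)^2 + (- rho \<alpha>))) * exp (- rho \<alpha>))
     = (exp (- (a/2)) * exp (a/2) + exp (- (a/2)) * exp (- (a/2))) / (2 * (1 + a))"
  proof -
    define k where "k = 1 + a"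
    have k: "k > 0" "1 + 2 * (a / 2) = k" unfolding k_def using a by auto
    show ?thesis unfolding cc_def r k(2) k_def[symmetric] using k(1) by (simp add: field_simps)
  qed
  also have "\<dots> = (1 + exp (- a)) / (2 * (1 + a))" unfolding e1 e2 ..
  finally show ?thesis unfolding a_def .
qed

lemma val_odd: assumes "\<alpha> \<noteq> 0"
  shows "(2 * cc \<alpha> * rho \<alpha> + 4 * cc \<alpha> * rho \<alpha> + (2 * cc \<alpha> / rho \<alpha>) * (rho \<alpha>^2 + rho \<alpha>)) * exp (rho \<alpha>)
        + (-1) * ((2 * cc \<alpha> * rho \<alpha> + 4 * cc \<alpha> * (- rho \<alpha>) + (2 * cc \<alpha> / rho \<alpha>) * ((- rho \<alpha>)^2 + (- rho \<alpha>))) * exp (- rho \<alpha>))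
   = (1 + 2 * (norm \<alpha>)^2 + exp (- (norm \<alpha> ^ 2))) / (2 * (1 + (norm \<alpha>)^2))"
proof -
  define a where "a = norm \<alpha> ^ 2"
  have r: "rho \<alpha> = a / 2" unfolding a_def rho_alt ..
  have a: "a > 0" unfolding a_def using assms by simp
  have e1: "exp (- (a/2)) * exp (a/2) = 1" by (simp add: exp_minus)
  have e2: "exp (- (a/2)) * exp (- (a/2)) = exp (- a)" by (simp add: exp_add[symmetric])
  have "(2 * cc \<alpha> * rho \<alpha> + 4 * cc \<alpha> * rho \<alpha> + (2 * cc \<alpha> / rho \<alpha>) * (rho \<alpha>^2 + rho \<alpha>)) * exp (rho \<alpha>)
        + (-1) * ((2 * cc \<alpha> * rho \<alpha> + 4 * cc \<alpha> * (- rho \<alpha>) + (2 * cc \<alpha> / rho \<alpha>) * ((- rho \<alpha>)^2 + (- rho \<alpha>))) * exp (- rho \<alpha>))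
     = ((1 + 2 * a) * (exp (- (a/2)) * exp (a/2)) + exp (- (a/2)) * exp (- (a/2))) / (2 * (1 + a))"
  proof -
    define k where "k = 1 + a"
    have k: "k > 0" "1 + 2 * (a / 2) = k" unfolding k_def using a by auto
    show ?thesis unfolding cc_def r k(2) k_def[symmetric] using k(1) a by (simp add: field_simps power2_eq_square)
  qed
  also have "\<dots> = (1 + 2 * a + exp (- a)) / (2 * (1 + a))" unfolding e1 e2 by simp
  finally show ?thesis unfolding a_def .
qed


theorem mainTheorem4:
  fixes \<alpha> :: complex
    and PA0 PA1 :: "(nat \<Rightarrow> complex) \<Rightarrow> (nat \<Rightarrow> complex)"
  assumes "\<alpha> \<noteq> 0"
    and "two_outcome_pvm PA0 PA1"
    and "PA1 (coh (\<alpha> / complex_of_real (sqrt 2))) = coh (\<alpha> / complex_of_real (sqrt 2))"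
    and "PA0 (\<lambda>n. create (coh (\<alpha> / complex_of_real (sqrt 2))) n
                 - cnj (\<alpha> / complex_of_real (sqrt 2)) * coh (\<alpha> / complex_of_real (sqrt 2)) n)
         = (\<lambda>n. create (coh (\<alpha> / complex_of_real (sqrt 2))) n
                 - cnj (\<alpha> / complex_of_real (sqrt 2)) * coh (\<alpha> / complex_of_real (sqrt 2)) n)"
  shows "prob PA0 parity_even (photon_added \<alpha>) 0 0
           = complex_of_real ((1 + exp (- (norm \<alpha> ^ 2))) / (2 * (1 + (norm \<alpha>)^2)))
       \<and> prob PA0 parity_even (photon_added \<alpha>) 1 1
           = complex_of_real ((1 + exp (- (norm \<alpha> ^ 2))) / (2 * (1 + (norm \<alpha>)^2)))
       \<and> prob PA1 parity_odd (photon_added \<alpha>) 0 1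
           = complex_of_real ((1 + 2 * (norm \<alpha>)^2 + exp (- (norm \<alpha> ^ 2))) / (2 * (1 + (norm \<alpha>)^2)))
       \<and> prob PA1 parity_odd (photon_added \<alpha>) 1 0
           = complex_of_real ((1 + 2 * (norm \<alpha>)^2 + exp (- (norm \<alpha> ^ 2))) / (2 * (1 + (norm \<alpha>)^2)))
       \<and> J_val PA0 PA1 parity_even parity_odd (photon_added \<alpha>)
           = complex_of_real (1/2 + exp (- (norm \<alpha> ^ 2)) / (2 * (1 + (norm \<alpha>)^2)))
       \<and> 1/2 + exp (- (norm \<alpha> ^ 2)) / (2 * (1 + (norm \<alpha>)^2)) > (1/2 :: real)"
proof -
  interpret S: setup_ctx \<alpha> PA0 PA1
    using assms unfolding setup_ctx_def pz_def zz_def by auto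
  define Ve where "Ve = (1 + exp (- (norm \<alpha> ^ 2))) / (2 * (1 + (norm \<alpha>)^2))"
  define Vo where "Vo = (1 + 2 * (norm \<alpha>)^2 + exp (- (norm \<alpha> ^ 2))) / (2 * (1 + (norm \<alpha>)^2))"
  have p00: "prob PA0 parity_even (photon_added \<alpha>) 0 0 = of_real Ve"
    using S.prob_even[of 0 0] unfolding val_even[OF assms(1)] Ve_def by simp
  have p11: "prob PA0 parity_even (photon_added \<alpha>) 1 1 = of_real Ve"
    using S.prob_even[of 1 1] unfolding val_even[OF assms(1)] Ve_def by simp
  have p01: "prob PA1 parity_odd (photon_added \<alpha>) 0 1 = of_real Vo"
    using S.prob_odd[of 0 1] unfolding val_odd[OF assms(1)] Vo_def by simp
  have p10: "prob PA1 parity_odd (photon_added \<alpha>) 1 0 = of_real Vo"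
    using S.prob_odd[of 1 0] unfolding val_odd[OF assms(1)] Vo_def by simp
  have K0: "1 + norm \<alpha> ^ 2 > (0::real)" by (simp add: add_pos_nonneg)
  have jv: "(Ve + Ve + Vo + Vo) / 4 = 1/2 + exp (- (norm \<alpha> ^ 2)) / (2 * (1 + (norm \<alpha>)^2))"
  proof -
    have g: "\<And>a e::real. 1 + a > 0 \<Longrightarrow> ((1 + e) / (2 * (1 + a)) + (1 + e) / (2 * (1 + a)) + (1 + 2 * a + e) / (2 * (1 + a)) + (1 + 2 * a + e) / (2 * (1 + a))) / 4
       = 1/2 + e / (2 * (1 + a))"
    proof -
      fix a e :: real assume h: "1 + a > 0"
      define k where "k = 1 + a"
      have k: "k > 0" "a = k - 1" using h k_def by auto
      show "((1 + e) / (2 * (1 + a)) + (1 + e) / (2 * (1 + a)) + (1 + 2 * a + e) / (2 * (1 + a)) + (1 + 2 * a + e) / (2 * (1 + a))) / 4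
       = 1/2 + e / (2 * (1 + a))" unfolding k(2) using k(1) by (simp add: field_simps)
    qed
    show ?thesis unfolding Ve_def Vo_def by (rule g[OF K0])
  qed
  have J: "J_val PA0 PA1 parity_even parity_odd (photon_added \<alpha>)
           = complex_of_real (1/2 + exp (- (norm \<alpha> ^ 2)) / (2 * (1 + (norm \<alpha>)^2)))"
    unfolding J_val_def p00 p11 p01 p10 jv[symmetric] by simp
  have pos: "1/2 + exp (- (norm \<alpha> ^ 2)) / (2 * (1 + (norm \<alpha>)^2)) > (1/2 :: real)"
    using K0 by simp
  show ?thesis using p00 p11 p01 p10 J pos unfolding Ve_def Vo_def by blast
qed


end
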